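(* For all integers $n,i,k\ge 0$, \[ \binom{n}{i}\binom{n+i}{i}\binom{n}{k}\binom{n+k}{k}=\sum_{j\ge0}\binom{i+k}{i}\binom{j}{j-i,\,j-k,\,i+k-j}\binom{n}{j}\binom{n+j}{j}. \]
   Context: $\binom{n}{k}=0$ unless $0\le k\le n$. The multinomial coefficient $\binom{m}{a,b,c}$ equals $\frac{m!}{a!\,b!\,c!}$ if $a,b,c\ge0$ and $a+b+c=m$, and $0$ otherwise. *)

theory Defs
  imports Main
begin

text \<open>Multinomial coefficient (m; a, b, c) = m!/(a! b! c!) if a,b,c \<ge> 0 and a+b+c = m,
  and 0 otherwise. Arguments are integers so that negative entries give 0.\<close>
definition multinom3 :: "int \<Rightarrow> int \<Rightarrow> int \<Rightarrow> int \<Rightarrow> nat" where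
  "multinom3 m a b c =
     (if a \<ge> 0 \<and> b \<ge> 0 \<and> c \<ge> 0 \<and> a + b + c = m
      then fact (nat m) div (fact (nat a) * fact (nat b) * fact (nat c)) else 0)"

end

theory Submission
  imports Defs Complex_Main
begin

definition g :: "int \<Rightarrow> real" where
  "g m = (if m < 0 then 0 else 1 / fact (nat m))"

lemma g_rec: "g (m - 1) = of_int m * g m"
proof (cases "m \<le> 0")
  case True
  then show ?thesis by (cases "m = 0") (auto simp: g_def)
next
  case False
  then have "nat m = Suc (nat (m - 1))" by simp
  then show ?thesis using False
    by (simp add: g_def field_simps del: of_nat_Suc)
qed

definition cc :: "nat \<Rightarrow> nat \<Rightarrow> int \<Rightarrow> real" where
  "cc i k j = fact (i+k) * fact i * fact k * g (j - int i) * g (j - int k) * g (int i + int k - j) * g j"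

definition PP :: "real \<Rightarrow> nat \<Rightarrow> real" where
  "PP x i = (\<Prod>t<i. x - real t * (real t + 1))"

lemma cc_rec: "cc (Suc i) k j = cc i k (j-1) + of_int ((j - int i) * (j + int i + 1)) * cc i k j"
proof -
  define K where "K = (fact (i+k) * fact i * fact k :: real)"
  define Q where "Q = g (j - int i - 1) * g (j - int k) * g (int i + int k + 1 - j) * g j"
  have h1: "g (j - 1 - int k) = of_int (j - int k) * g (j - int k)"
    using g_rec[of "j - int k"] by (simp add: algebra_simps)
  have h2: "g (j - 1) = of_int j * g j" using g_rec by simp
  have h3: "g (int i + int k - j) = of_int (int i + int k + 1 - j) * g (int i + int k + 1 - j)"
    using g_rec[of "int i + int k + 1 - j"] by (simp add: algebra_simps)
  have h4: "of_int (j - int i) * g (j - int i) = g (j - int i - 1)"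
    using g_rec[of "j - int i"] by simp
  have e1: "cc (Suc i) k j = (real (i+k+1) * real (i+1)) * K * Q"
    unfolding cc_def K_def Q_def by (simp add: algebra_simps)
  have e2: "cc i k (j-1) = (of_int (j - int k) * of_int j) * K * Q"
  proof -
    have "cc i k (j-1) = K * g (j - int i - 1) * g (j - 1 - int k) * g (int i + int k + 1 - j) * g (j-1)"
      unfolding cc_def K_def by (simp add: algebra_simps)
    also have "\<dots> = (of_int (j - int k) * of_int j) * K * Q"
      unfolding h1 h2 Q_def by (simp add: algebra_simps)
    finally show ?thesis .
  qed
  have e3: "of_int ((j - int i) * (j + int i + 1)) * cc i k j
      = (of_int (j + int i + 1) * of_int (int i + int k + 1 - j)) * K * Q"
  proof -
    have "of_int ((j - int i) * (j + int i + 1)) * cc i k j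
      = of_int (j + int i + 1) * K * (of_int (j - int i) * g (j - int i)) * g (j - int k) * g (int i + int k - j) * g j"
      unfolding cc_def K_def by (simp add: algebra_simps)
    also have "\<dots> = (of_int (j + int i + 1) * of_int (int i + int k + 1 - j)) * K * Q"
      unfolding h4 h3 Q_def by (simp add: algebra_simps)
    finally show ?thesis .
  qed
  have alg: "(of_int (j - int k) * of_int j) + (of_int (j + int i + 1) * of_int (int i + int k + 1 - j))
      = (real (i+k+1) * real (i+1))"
  proof -
    have "(j - int k) * j + (j + int i + 1) * (int i + int k + 1 - j) = int (i+k+1) * int (i+1)"
      by (simp add: algebra_simps)
    then have "real_of_int ((j - int k) * j + (j + int i + 1) * (int i + int k + 1 - j)) = real_of_int (int (i+k+1) * int (i+1))"
      by simp
    then show ?thesis by simp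
  qed
  show ?thesis unfolding e1 e2 e3 by (simp add: alg[symmetric] algebra_simps)
qed


lemma g_neg: "m < 0 \<Longrightarrow> g m = 0" by (simp add: g_def)

lemma PP_Suc: "PP x (Suc j) = PP x j * (x - real j * (real j + 1))"
  by (simp add: PP_def)

lemma cc0: "cc 0 k (int j) = (if j = k then 1 else 0)"
proof (cases "j = k")
  case True then show ?thesis by (simp add: cc_def g_def)
next
  case False
  then have "int j - int k < 0 \<or> int k - int j < 0" by linarith
  then show ?thesis using False by (auto simp: cc_def g_neg)
qed

lemma PP_mult: "PP x i * PP x k = (\<Sum>j\<le>i+k. cc i k (int j) * PP x j)"
proof (induction i)
  case 0
  have "(\<Sum>j\<le>0+k. cc 0 k (int j) * PP x j) = (\<Sum>j\<le>k. if j = k then PP x k else 0)"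
    by (rule sum.cong) (auto simp: cc0)
  also have "\<dots> = PP x k" by simp
  finally show ?case by (simp add: PP_def)
next
  case (Suc i)
  let ?c = "\<lambda>j. real_of_int ((int j - int i) * (int j + int i + 1))"
  have xs: "\<And>j. (x - real i * (real i + 1)) * PP x j = PP x (Suc j) + ?c j * PP x j"
    by (simp add: PP_Suc algebra_simps)
  have "PP x (Suc i) * PP x k = (x - real i * (real i + 1)) * (PP x i * PP x k)"
    by (simp add: PP_Suc algebra_simps)
  also have "\<dots> = (\<Sum>j\<le>i+k. cc i k (int j) * ((x - real i * (real i + 1)) * PP x j))"
    by (simp add: Suc.IH sum_distrib_left algebra_simps)
  also have "\<dots> = (\<Sum>j\<le>i+k. cc i k (int j) * PP x (Suc j)) + (\<Sum>j\<le>i+k. ?c j * cc i k (int j) * PP x j)"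
    unfolding sum.distrib[symmetric] by (rule sum.cong) (simp_all add: PP_Suc algebra_simps)
  also have "(\<Sum>j\<le>i+k. cc i k (int j) * PP x (Suc j)) = (\<Sum>j\<le>Suc (i+k). cc i k (int j - 1) * PP x j)"
    by (subst sum.atMost_Suc_shift) (simp add: cc_def g_neg)
  also have "(\<Sum>j\<le>i+k. ?c j * cc i k (int j) * PP x j) = (\<Sum>j\<le>Suc (i+k). ?c j * cc i k (int j) * PP x j)"
    by (simp add: cc_def g_neg)
  also have "(\<Sum>j\<le>Suc (i+k). cc i k (int j - 1) * PP x j) + (\<Sum>j\<le>Suc (i+k). ?c j * cc i k (int j) * PP x j)
     = (\<Sum>j\<le>Suc i+k. cc (Suc i) k (int j) * PP x j)"
    unfolding sum.distrib[symmetric] by (rule sum.cong) (simp_all add: cc_rec algebra_simps)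
  finally show ?case .
qed


lemma g_nat: "g (int a) = 1 / fact a" by (simp add: g_def)

lemma a_PP: "real ((n choose i) * ((n+i) choose i)) * (fact i)^2 = PP (real (n*(n+1))) i"
proof (induction i)
  case 0 then show ?case by (simp add: PP_def)
next
  case (Suc i)
  have b1: "Suc i * (n choose Suc i) = (n - i) * (n choose i)"
    using binomial_absorption[of i n] binomial_absorb_comp[of n i] by simp
  have b2: "Suc i * ((n + Suc i) choose Suc i) = (n + i + 1) * ((n+i) choose i)"
    using Suc_times_binomial[of i "n+i"] by simp
  have "real ((n choose Suc i) * ((n+Suc i) choose Suc i)) * (fact (Suc i))^2
      = real (Suc i * (n choose Suc i)) * real (Suc i * ((n + Suc i) choose Suc i)) * (fact i)^2"
    by (simp add: power2_eq_square algebra_simps)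
  also have "\<dots> = real ((Suc i * (n choose Suc i)) * (Suc i * ((n + Suc i) choose Suc i))) * (fact i)^2"
    by (simp only: of_nat_mult)
  also have "(Suc i * (n choose Suc i)) * (Suc i * ((n + Suc i) choose Suc i)) = ((n - i) * (n + i + 1)) * ((n choose i) * ((n+i) choose i))"
    by (simp only: b1 b2 ac_simps)
  also have "real (((n - i) * (n + i + 1)) * ((n choose i) * ((n+i) choose i))) * (fact i)^2 = real ((n - i) * (n + i + 1)) * (real ((n choose i) * ((n+i) choose i)) * (fact i)^2)"
    by (simp only: of_nat_mult mult.assoc)
  also have "\<dots> = real ((n - i) * (n + i + 1)) * PP (real (n*(n+1))) i"
    using Suc.IH by simp
  also have "\<dots> = PP (real (n*(n+1))) (Suc i)"
  proof (cases "i \<le> n")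
    case True
    then have r1: "real (n - i) = real n - real i" by (simp add: of_nat_diff)
    have "real ((n - i) * (n + i + 1)) = (real n - real i) * (real n + real i + 1)"
      unfolding of_nat_mult r1 by simp
    then have eqr: "real ((n - i) * (n + i + 1)) = real (n*(n+1)) - real i * (real i + 1)"
      by (simp add: algebra_simps)
    show ?thesis unfolding PP_Suc eqr by (rule mult.commute)
  next
    case False
    then have "n choose i = 0" by simp
    then have "PP (real (n*(n+1))) i = 0" using Suc.IH by (metis mult_zero_left of_nat_0)
    then show ?thesis by (simp add: PP_Suc)
  qed
  finally show ?case .
qed

lemma a_PP': "real ((n choose i) * ((n+i) choose i)) = PP (real (n*(n+1))) i / (fact i)^2"
  using a_PP[of n i] by (simp add: field_simps)

lemma fact3_dvd: "a + b + c = m \<Longrightarrow> fact a * fact b * fact c dvd (fact m :: nat)"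
proof -
  assume h: "a + b + c = m"
  have "m - a = b + c" using h by simp
  have 1: "fact a * fact (b + c) * (m choose a) = (fact m :: nat)"
    using binomial_fact_lemma[of a m] h by (simp add: \<open>m - a = b + c\<close>)
  have 2: "fact b * fact c * ((b+c) choose b) = (fact (b+c) :: nat)"
    using binomial_fact_lemma[of b "b+c"] by simp
  have "fact m = fact a * fact b * fact c * (((b+c) choose b) * (m choose a))"
    using 1 2[symmetric] by (simp add: algebra_simps)
  then show ?thesis by (metis dvd_triv_left)
qed

lemma term_eq:
  assumes "j \<le> i + k"
  shows "cc i k (int j) / ((fact i)^2 * (fact k)^2)
    = real ((i + k) choose i) * real (multinom3 (int j) (int j - int i) (int j - int k) (int i + int k - int j)) / (fact j)^2"
proof (cases "i \<le> j \<and> k \<le> j")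
  case True
  have m: "real (multinom3 (int j) (int j - int i) (int j - int k) (int i + int k - int j))
     = fact j / (fact (j - i) * fact (j - k) * fact (i + k - j))"
  proof -
    have n1: "nat (int j - int i) = j - i" "nat (int j - int k) = j - k" "nat (int i + int k - int j) = i + k - j"
      "nat (int j) = j" using True assms by auto
    have d: "fact (j - i) * fact (j - k) * fact (i + k - j) dvd (fact j :: nat)"
      by (rule fact3_dvd) (use True assms in auto)
    show ?thesis unfolding multinom3_def using True assms
      by (simp add: n1 real_of_nat_div[OF d])
  qed
  have c: "real ((i + k) choose i) = fact (i+k) / (fact i * fact k)"
    using binomial_fact[of i "i+k"] by simp
  have cc': "cc i k (int j) = fact (i+k) * fact i * fact k / (fact (j - i) * fact (j - k) * fact (i + k - j) * fact j)"
  proof -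
    have e: "int j - int i = int (j - i)" "int j - int k = int (j - k)" "int i + int k - int j = int (i + k - j)"
      using True assms by auto
    show ?thesis unfolding cc_def e g_nat by simp
  qed
  have fpos: "fact (j - i) * fact (j - k) * fact (i + k - j) \<noteq> (0::real)" "fact i \<noteq> (0::real)" "fact k \<noteq> (0::real)" "fact j \<noteq> (0::real)"
    by auto
  show ?thesis unfolding m c cc' using fpos by (simp add: divide_simps power2_eq_square)
next
  case False
  then have "cc i k (int j) = 0" by (auto simp: cc_def g_neg)
  moreover have "multinom3 (int j) (int j - int i) (int j - int k) (int i + int k - int j) = 0"
    using False by (auto simp: multinom3_def)
  ultimately show ?thesis by simp
qed

theorem mainTheorem3:
  fixes n i k :: nat
  shows "(n choose i) * ((n + i) choose i) * (n choose k) * ((n + k) choose k) =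
    (\<Sum>j\<le>i + k. ((i + k) choose i)
        * multinom3 (int j) (int j - int i) (int j - int k) (int i + int k - int j)
        * (n choose j) * ((n + j) choose j))"
proof -
  define x where "x = real (n*(n+1))"
  have aj: "\<And>j. PP x j / (fact j)^2 = real (n choose j) * real ((n+j) choose j)"
    using a_PP' unfolding x_def by (metis of_nat_mult)
  have "real ((n choose i) * ((n + i) choose i) * (n choose k) * ((n + k) choose k))
     = real ((n choose i) * ((n + i) choose i)) * real ((n choose k) * ((n + k) choose k))"
    by (simp add: algebra_simps)
  also have "\<dots> = PP x i * PP x k / ((fact i)^2 * (fact k)^2)"
    unfolding a_PP' x_def by simp
  also have "\<dots> = (\<Sum>j\<le>i+k. cc i k (int j) / ((fact i)^2 * (fact k)^2) * PP x j)"
    unfolding PP_mult sum_divide_distrib by (simp add: algebra_simps)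
  also have "\<dots> = (\<Sum>j\<le>i+k. real ((i + k) choose i) * real (multinom3 (int j) (int j - int i) (int j - int k) (int i + int k - int j)) * (PP x j / (fact j)^2))"
    by (rule sum.cong) (simp_all add: term_eq)
  also have "\<dots> = real (\<Sum>j\<le>i + k. ((i + k) choose i)
        * multinom3 (int j) (int j - int i) (int j - int k) (int i + int k - int j)
        * (n choose j) * ((n + j) choose j))"
    unfolding of_nat_sum by (rule sum.cong) (simp_all add: aj)
  finally show ?thesis by (simp only: of_nat_eq_iff)
qed

end
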